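(* Let $\alpha\in(1,2)$, $H\in\left(\frac{2-\alpha}{2},\frac12\right)$, $t>0$, and $h(\xi):=\big(1-e^{-2t\xi^\alpha}\big)\xi^{1-2H-\alpha}$ for $\xi>0$. Then $$\int_0^\infty h(\xi)\cos(\xi r)\,d\xi=O\big(r^{\frac{H-1}{2}}\big)\quad\text{as } r\to\infty.$$
   Context: The integral is understood as an improper Riemann integral $\lim_{R\to\infty}\int_0^R$. *)

theory Defs
  imports "HOL-Analysis.Analysis" "HOL-Library.Landau_Symbols"
begin

definition hfun :: "real \<Rightarrow> real \<Rightarrow> real \<Rightarrow> real \<Rightarrow> real" where
  "hfun \<alpha> H t \<xi> = (1 - exp (- 2 * t * \<xi> powr \<alpha>)) * \<xi> powr (1 - 2 * H - \<alpha>)"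

definition improper_integral0 :: "(real \<Rightarrow> real) \<Rightarrow> real" where
  "improper_integral0 f = Lim at_top (\<lambda>R::real. integral {0..R} f)"

definition improper_integrable0 :: "(real \<Rightarrow> real) \<Rightarrow> bool" where
  "improper_integrable0 f \<longleftrightarrow> (\<forall>R\<ge>0. f integrable_on {0..R}) \<and>
      (\<exists>L. ((\<lambda>R. integral {0..R} f) \<longlongrightarrow> L) at_top)"

end

theory Submission imports Defs "HOL-Real_Asymp.Real_Asymp" begin

definition hdr :: "real \<Rightarrow> real \<Rightarrow> real \<Rightarrow> real \<Rightarrow> real" where
  "hdr \<alpha> H t \<xi> = 2*t*\<alpha> * \<xi> powr (\<alpha>-1) * exp (- 2 * t * \<xi> powr \<alpha>) * \<xi> powr (1 - 2*H - \<alpha>)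
     + (1 - exp (- 2 * t * \<xi> powr \<alpha>)) * ((1 - 2*H - \<alpha>) * \<xi> powr (1 - 2*H - \<alpha> - 1))"

context
  fixes \<alpha> H t :: real
  assumes a1: "1 < \<alpha>" and a2: "\<alpha> < 2" and aH1: "(2 - \<alpha>) / 2 < H" and aH2: "H < 1/2" and at: "t > 0"
begin

lemma h_nonneg: "0 \<le> \<xi> \<Longrightarrow> 0 \<le> hfun \<alpha> H t \<xi>"
  unfolding hfun_def using at by (intro mult_nonneg_nonneg) auto

lemma h_le1:
  assumes "0 < \<xi>" shows "hfun \<alpha> H t \<xi> \<le> 2 * t * \<xi> powr (1 - 2*H)"
proof -
  have "1 - exp (- 2 * t * \<xi> powr \<alpha>) \<le> 2 * t * \<xi> powr \<alpha>"
    using exp_ge_add_one_self[of "- 2 * t * \<xi> powr \<alpha>"] by simp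
  hence "hfun \<alpha> H t \<xi> \<le> (2 * t * \<xi> powr \<alpha>) * \<xi> powr (1 - 2 * H - \<alpha>)"
    unfolding hfun_def by (intro mult_right_mono) auto
  also have "\<dots> = 2 * t * \<xi> powr (1 - 2*H)"
    using assms by (simp add: powr_add[symmetric])
  finally show ?thesis .
qed

lemma h_le2:
  assumes "0 < \<xi>" shows "hfun \<alpha> H t \<xi> \<le> \<xi> powr (1 - 2*H - \<alpha>)"
  unfolding hfun_def using assms at by (intro mult_left_le_one_le) auto

lemma h_bound:
  assumes "0 \<le> \<xi>" shows "\<bar>hfun \<alpha> H t \<xi>\<bar> \<le> 2 * t + 1"
proof (cases "\<xi> = 0")
  case True thus ?thesis using at by (simp add: hfun_def)
next
  case False
  hence p: "0 < \<xi>" using assms by auto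
  show ?thesis
  proof (cases "\<xi> \<le> 1")
    case True
    have "\<xi> powr (1 - 2*H) \<le> 1" using True p aH2 powr_mono2[of "1-2*H" \<xi> 1] by auto
    hence "2 * t * \<xi> powr (1 - 2*H) \<le> 2 * t" using at by simp
    thus ?thesis using h_le1[OF p] h_nonneg[OF assms] by linarith
  next
    case False
    have "\<xi> powr (1 - 2*H - \<alpha>) \<le> 1 powr (1 - 2*H - \<alpha>)"
      using False aH1 by (intro powr_mono2') auto
    thus ?thesis using h_le2[OF p] h_nonneg[OF assms] at by simp
  qed
qed

lemma h_dom:
  assumes "0 \<le> \<xi>" shows "\<bar>hfun \<alpha> H t \<xi>\<bar> \<le> (2*t+1) * 2 powr (-(1 - 2*H - \<alpha>)) * (1+\<xi>) powr (1 - 2*H - \<alpha>)"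
proof -
  define \<beta> where "\<beta> = 1 - 2*H - \<alpha>"
  have b: "\<beta> < 0" using aH1 unfolding \<beta>_def by auto
  have "2 powr (-\<beta>) * (1+\<xi>) powr \<beta> = ((1+\<xi>)/2) powr \<beta>"
    using assms by (simp add: powr_minus powr_divide divide_simps)
  show ?thesis
  proof (cases "\<xi> \<le> 1")
    case True
    have "1 powr \<beta> \<le> ((1+\<xi>)/2) powr \<beta>"
      using True assms b by (intro powr_mono2') auto
    hence "(2*t+1) * 1 \<le> (2*t+1) * ((1+\<xi>)/2) powr \<beta>"
      using at by (intro mult_left_mono) auto
    thus ?thesis using h_bound[OF assms] \<open>2 powr (-\<beta>) * (1+\<xi>) powr \<beta> = ((1+\<xi>)/2) powr \<beta>\<close>
      unfolding \<beta>_def by (simp add: mult.assoc)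
  next
    case False
    hence p: "0 < \<xi>" by auto
    have "\<xi> powr \<beta> \<le> ((1+\<xi>)/2) powr \<beta>"
      using False b by (intro powr_mono2') auto
    also have "\<dots> \<le> (2*t+1) * ((1+\<xi>)/2) powr \<beta>"
      using at mult_right_mono[of 1 "2*t+1" "((1+\<xi>)/2) powr \<beta>"] by simp
    finally show ?thesis using h_le2[OF p] h_nonneg[OF assms]
      \<open>2 powr (-\<beta>) * (1+\<xi>) powr \<beta> = ((1+\<xi>)/2) powr \<beta>\<close>
      unfolding \<beta>_def by (simp add: mult.assoc)
  qed
qed

lemma h_le1': "0 \<le> \<xi> \<Longrightarrow> hfun \<alpha> H t \<xi> \<le> 2 * t * \<xi> powr (1 - 2*H)"
  using h_le1[of \<xi>] by (cases "\<xi> = 0") (auto simp: hfun_def)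

lemma h_cont: "continuous_on {0..} (hfun \<alpha> H t)"
proof -
  have "continuous (at x within {0..}) (hfun \<alpha> H t)" if "x \<in> {0..}" for x
  proof (cases "x = 0")
    case False
    hence "x > 0" using that by auto
    hence "isCont (hfun \<alpha> H t) x" unfolding hfun_def by (intro continuous_intros) auto
    thus ?thesis by (rule continuous_at_imp_continuous_within)
  next
    case True
    have lim: "((\<lambda>\<xi>. 2 * t * \<xi> powr (1 - 2*H)) \<longlongrightarrow> 2 * t * 0) (at 0 within {0..})"
      using aH2 by (intro tendsto_mult tendsto_const tendsto_zero_powrI tendsto_ident_at)
        (auto simp: eventually_at_filter)
    have "(hfun \<alpha> H t \<longlongrightarrow> 0) (at 0 within {0..})"
      by (rule tendsto_sandwich[OF _ _ tendsto_const lim[simplified]])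
        (auto simp: eventually_at_filter h_nonneg h_le1')
    thus ?thesis using True by (simp add: continuous_within hfun_def)
  qed
  thus ?thesis by (simp add: continuous_on_eq_continuous_within)
qed


lemma h_deriv: "0 < \<xi> \<Longrightarrow> (hfun \<alpha> H t has_real_derivative hdr \<alpha> H t \<xi>) (at \<xi>)"
  unfolding hfun_def[abs_def] hdr_def
  by (rule derivative_eq_intros refl | simp)+

lemma hdr_cont: "continuous_on {0<..} (hdr \<alpha> H t)"
  unfolding hdr_def by (intro continuous_intros) auto

lemma hdr_bound1:
  assumes "0 < \<xi>" "\<xi> \<le> 1"
  shows "\<bar>hdr \<alpha> H t \<xi>\<bar> \<le> (2*t+1) * (\<alpha> - (1 - 2*H - \<alpha>)) * \<xi> powr (-2*H)"
proof -
  define \<beta> where "\<beta> = 1 - 2*H - \<alpha>"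
  define e where "e = exp (- 2 * t * \<xi> powr \<alpha>)"
  define X where "X = 2*t*\<alpha> * \<xi> powr (\<alpha>-1) * e * \<xi> powr \<beta>"
  define Y where "Y = (1 - e) * (\<beta> * \<xi> powr (\<beta> - 1))"
  define q where "q = \<xi> powr (-2*H)"
  have hXY: "hdr \<alpha> H t \<xi> = X + Y" unfolding hdr_def X_def Y_def \<beta>_def e_def by simp
  have b: "\<beta> < 0" using aH1 unfolding \<beta>_def by auto
  have q0: "0 \<le> q" unfolding q_def by simp
  have e0: "0 < e" "e \<le> 1" unfolding e_def using at assms by auto
  have e1: "1 - e \<le> 2 * t * \<xi> powr \<alpha>"
    using exp_ge_add_one_self[of "- 2 * t * \<xi> powr \<alpha>"] unfolding e_def by simp
  have p1: "\<xi> powr (\<alpha>-1) * \<xi> powr \<beta> = q"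
    using assms unfolding \<beta>_def q_def by (simp add: powr_add[symmetric])
  have p2: "\<xi> powr \<alpha> * \<xi> powr (\<beta>-1) = q"
    using assms unfolding \<beta>_def q_def by (simp add: powr_add[symmetric])
  have A: "0 \<le> X" unfolding X_def using at a1 e0 by auto
  have A2: "X \<le> 2*t*\<alpha> * q"
    unfolding X_def using at a1 e0 p1 q0 mult_left_mono[of e 1 "2*t*\<alpha> * q"]
    by (simp add: mult_ac)
  have bp: "0 \<le> -\<beta> * \<xi> powr (\<beta> - 1)" using b mult_nonpos_nonneg[of \<beta> "\<xi> powr (\<beta>-1)"] by simp
  have mY: "-Y = (1 - e) * (-\<beta> * \<xi> powr (\<beta> - 1))" unfolding Y_def by simp
  have B: "0 \<le> -Y" unfolding mY using e0 bp b q0 by (intro mult_nonneg_nonneg) auto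
  have B2: "-Y \<le> (2 * t * \<xi> powr \<alpha>) * (-\<beta> * \<xi> powr (\<beta> - 1))"
    unfolding mY using e1 bp by (intro mult_right_mono) auto
  have B3: "(2 * t * \<xi> powr \<alpha>) * (-\<beta> * \<xi> powr (\<beta> - 1)) = 2*t*(-\<beta>) * q"
    using p2 by (simp add: mult_ac)
  have nn: "0 \<le> 2*t*(-\<beta>) * q" "0 \<le> 2*t*\<alpha> * q"
    using at b q0 a1 by (metis mult_nonneg_nonneg less_imp_le neg_0_le_iff_le zero_le_numeral
       zero_less_one order.strict_trans)+
  have "\<bar>hdr \<alpha> H t \<xi>\<bar> \<le> 2*t*\<alpha> * q + 2*t*(-\<beta>) * q"
    unfolding hXY abs_le_iff using A A2 B B2 B3 nn by linarith
  also have "\<dots> = 2*t * (\<alpha> - \<beta>) * q" by (simp add: algebra_simps)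
  also have "\<dots> \<le> (2*t+1) * (\<alpha> - \<beta>) * q"
    using b a1 q0 by (intro mult_right_mono) auto
  finally show ?thesis unfolding \<beta>_def q_def .
qed

lemma hdr_bound2:
  assumes "1 \<le> \<xi>"
  shows "\<bar>hdr \<alpha> H t \<xi>\<bar> \<le> (2*t+1) * (\<alpha> - (1 - 2*H - \<alpha>)) * \<xi> powr ((1 - 2*H - \<alpha>) - 1)"
proof -
  define \<beta> where "\<beta> = 1 - 2*H - \<alpha>"
  define e where "e = exp (- 2 * t * \<xi> powr \<alpha>)"
  define X where "X = 2*t*\<alpha> * \<xi> powr (\<alpha>-1) * e * \<xi> powr \<beta>"
  define Y where "Y = (1 - e) * (\<beta> * \<xi> powr (\<beta> - 1))"
  define q where "q = \<xi> powr (\<beta>-1)"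
  have hXY: "hdr \<alpha> H t \<xi> = X + Y" unfolding hdr_def X_def Y_def \<beta>_def e_def by simp
  have xp: "0 < \<xi>" using assms by auto
  have q0: "0 \<le> q" unfolding q_def by simp
  have b: "\<beta> < 0" using aH1 unfolding \<beta>_def by auto
  have e0: "0 < e" "e \<le> 1" unfolding e_def using at assms by auto
  have pa: "0 < \<xi> powr \<alpha>" using xp by auto
  have "2 * t * \<xi> powr \<alpha> \<le> exp (2 * t * \<xi> powr \<alpha>)"
    using exp_ge_add_one_self[of "2 * t * \<xi> powr \<alpha>"] by linarith
  hence e2: "e * (2 * t * \<xi> powr \<alpha>) \<le> 1"
    unfolding e_def by (simp add: exp_minus field_simps)
  have ee: "\<alpha> - 1 + \<beta> = \<alpha> + (\<beta> - 1)" by simp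
  have p1: "\<xi> powr (\<alpha>-1) * \<xi> powr \<beta> = \<xi> powr \<alpha> * q"
    using xp unfolding q_def by (simp only: powr_add[symmetric] ee)
  have A: "0 \<le> X" unfolding X_def using at a1 e0 xp by auto
  have "X = \<alpha> * (e * (2 * t * \<xi> powr \<alpha>)) * q"
    unfolding X_def using p1 by (simp add: mult_ac)
  also have "\<dots> \<le> \<alpha> * 1 * q"
    using e2 a1 q0 by (intro mult_right_mono mult_left_mono) auto
  finally have A2: "X \<le> \<alpha> * q" by simp
  have bp: "0 \<le> -\<beta> * q" using b q0 mult_nonpos_nonneg[of \<beta> q] by simp
  have mY: "-Y = (1 - e) * (-\<beta> * q)" unfolding Y_def q_def by simp
  have B: "0 \<le> -Y" unfolding mY using e0 bp b q0 by (intro mult_nonneg_nonneg) auto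
  have B2: "-Y \<le> 1 * (-\<beta> * q)"
    unfolding mY using e0 bp by (intro mult_right_mono) auto
  have nn: "0 \<le> \<alpha> * q" using a1 q0 by auto
  have "\<bar>hdr \<alpha> H t \<xi>\<bar> \<le> \<alpha> * q + (-\<beta>) * q"
    unfolding hXY abs_le_iff using A A2 B B2 nn bp by linarith
  also have "\<dots> = 1 * (\<alpha> - \<beta>) * q" by (simp add: algebra_simps)
  also have "\<dots> \<le> (2*t+1) * (\<alpha> - \<beta>) * q"
    using b a1 at q0 by (intro mult_right_mono) auto
  finally show ?thesis unfolding \<beta>_def q_def .
qed


lemma absd_integrable: "0 < a \<Longrightarrow> (\<lambda>x. \<bar>hdr \<alpha> H t x\<bar>) integrable_on {a..b}"
  by (intro integrable_continuous_interval continuous_on_rabs continuous_on_subset[OF hdr_cont]) auto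

lemma int_piece1:
  assumes "0 < a" "a \<le> b" "b \<le> 1"
  shows "integral {a..b} (\<lambda>x. \<bar>hdr \<alpha> H t x\<bar>) \<le> (2*t+1) * (\<alpha> - (1 - 2*H - \<alpha>)) / (1 - 2*H)"
proof -
  define C where "C = (2*t+1) * (\<alpha> - (1 - 2*H - \<alpha>))"
  have C0: "0 \<le> C" unfolding C_def using at aH1 a1 by auto
  have h2: "0 < 1 - 2*H" using aH2 by simp
  have "((\<lambda>x. C * x powr (-2*H)) has_integral (C * b powr (1-2*H)/(1-2*H) - C * a powr (1-2*H)/(1-2*H))) {a..b}"
  proof (rule fundamental_theorem_of_calculus[OF assms(2)])
    fix x assume x: "x \<in> {a..b}"
    hence "x > 0" using assms by auto
    have "((\<lambda>x. C * x powr (1-2*H)/(1-2*H)) has_real_derivative C * ((1-2*H) * x powr (1-2*H-1))/(1-2*H)) (at x within {a..b})"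
      using \<open>x > 0\<close> h2 by (intro derivative_eq_intros) auto
    moreover have "C * ((1-2*H) * x powr (1-2*H-1))/(1-2*H) = C * x powr (-2*H)" using h2 by simp
    ultimately show "((\<lambda>x. C * x powr (1-2*H)/(1-2*H)) has_vector_derivative C * x powr (-2*H)) (at x within {a..b})"
      by (simp add: has_real_derivative_iff_has_vector_derivative)
  qed
  hence I: "integral {a..b} (\<lambda>x. C * x powr (-2*H)) = C * b powr (1-2*H)/(1-2*H) - C * a powr (1-2*H)/(1-2*H)"
    by (rule integral_unique)
  have "integral {a..b} (\<lambda>x. \<bar>hdr \<alpha> H t x\<bar>) \<le> integral {a..b} (\<lambda>x. C * x powr (-2*H))"
    using hdr_bound1 assms unfolding C_def
    by (intro integral_le absd_integrable integrable_continuous_interval continuous_intros) auto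
  also have "\<dots> \<le> C / (1-2*H)"
  proof -
    have "b powr (1-2*H) \<le> 1 powr (1-2*H)" using assms h2 by (intro powr_mono2) auto
    hence "C * b powr (1-2*H) \<le> C" using C0 mult_left_mono[of "b powr (1-2*H)" 1 C] by simp
    moreover have "0 \<le> C * a powr (1-2*H)" using C0 by simp
    ultimately show ?thesis unfolding I using h2 by (simp add: divide_right_mono diff_divide_distrib[symmetric])
  qed
  finally show ?thesis unfolding C_def .
qed

lemma int_piece2:
  assumes "1 \<le> a" "a \<le> b"
  shows "integral {a..b} (\<lambda>x. \<bar>hdr \<alpha> H t x\<bar>) \<le> (2*t+1) * (\<alpha> - (1 - 2*H - \<alpha>)) / (-(1 - 2*H - \<alpha>))"
proof -
  define \<beta> where "\<beta> = 1 - 2*H - \<alpha>"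
  define C where "C = (2*t+1) * (\<alpha> - \<beta>)"
  have b: "\<beta> < 0" using aH1 unfolding \<beta>_def by auto
  have C0: "0 \<le> C" unfolding C_def using at b a1 by auto
  have "((\<lambda>x. C * x powr (\<beta>-1)) has_integral (C * b powr \<beta>/\<beta> - C * a powr \<beta>/\<beta>)) {a..b}"
  proof (rule fundamental_theorem_of_calculus[OF assms(2)])
    fix x assume x: "x \<in> {a..b}"
    hence "x > 0" using assms by auto
    have "((\<lambda>x. C * x powr \<beta>/\<beta>) has_real_derivative C * (\<beta> * x powr (\<beta>-1))/\<beta>) (at x within {a..b})"
      using \<open>x > 0\<close> b by (intro derivative_eq_intros) auto
    moreover have "C * (\<beta> * x powr (\<beta>-1))/\<beta> = C * x powr (\<beta>-1)" using b by simp
    ultimately show "((\<lambda>x. C * x powr \<beta>/\<beta>) has_vector_derivative C * x powr (\<beta>-1)) (at x within {a..b})"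
      by (simp add: has_real_derivative_iff_has_vector_derivative)
  qed
  hence I: "integral {a..b} (\<lambda>x. C * x powr (\<beta>-1)) = C * b powr \<beta>/\<beta> - C * a powr \<beta>/\<beta>"
    by (rule integral_unique)
  have "integral {a..b} (\<lambda>x. \<bar>hdr \<alpha> H t x\<bar>) \<le> integral {a..b} (\<lambda>x. C * x powr (\<beta>-1))"
    using hdr_bound2 assms unfolding C_def \<beta>_def
    by (intro integral_le absd_integrable integrable_continuous_interval continuous_intros) auto
  also have "\<dots> \<le> C / (-\<beta>)"
  proof -
    have "a powr \<beta> \<le> 1 powr \<beta>" using assms b by (intro powr_mono2') auto
    hence "C * a powr \<beta> \<le> C" using C0 mult_left_mono[of "a powr \<beta>" 1 C] by simp
    moreover have "0 \<le> C * b powr \<beta>" using C0 by simp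
    ultimately have "C * a powr \<beta> - C * b powr \<beta> \<le> C" by simp
    hence "(C * a powr \<beta> - C * b powr \<beta>) / (-\<beta>) \<le> C / (-\<beta>)" using b by (intro divide_right_mono) auto
    moreover have "C * b powr \<beta>/\<beta> - C * a powr \<beta>/\<beta> = (C * a powr \<beta> - C * b powr \<beta>) / (-\<beta>)"
      using b by (simp add: diff_divide_distrib)
    ultimately show ?thesis unfolding I by simp
  qed
  finally show ?thesis unfolding C_def \<beta>_def .
qed

lemma int_absd:
  assumes "0 < a" "a \<le> b"
  shows "integral {a..b} (\<lambda>x. \<bar>hdr \<alpha> H t x\<bar>) \<le>
     (2*t+1) * (\<alpha> - (1 - 2*H - \<alpha>)) / (1 - 2*H) + (2*t+1) * (\<alpha> - (1 - 2*H - \<alpha>)) / (-(1 - 2*H - \<alpha>))"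
    (is "_ \<le> ?P + ?Q")
proof -
  have P0: "0 \<le> ?P" using at aH1 aH2 a1 by (intro divide_nonneg_pos mult_nonneg_nonneg) auto
  have Q0: "0 \<le> ?Q" using at aH1 aH2 a1 by (intro divide_nonneg_pos mult_nonneg_nonneg) auto
  show ?thesis
  proof (cases "b \<le> 1")
    case True thus ?thesis using int_piece1[OF assms True] Q0 by linarith
  next
    case False
    show ?thesis
    proof (cases "1 \<le> a")
      case True thus ?thesis using int_piece2[OF True assms(2)] P0 by linarith
    next
      case False2: False
      have "integral {a..1} (\<lambda>x. \<bar>hdr \<alpha> H t x\<bar>) + integral {1..b} (\<lambda>x. \<bar>hdr \<alpha> H t x\<bar>)
          = integral {a..b} (\<lambda>x. \<bar>hdr \<alpha> H t x\<bar>)"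
        using False False2 assms absd_integrable[OF assms(1), of b]
          Henstock_Kurzweil_Integration.integral_combine[where a=a and c=1 and b=b and f="\<lambda>x. \<bar>hdr \<alpha> H t x\<bar>"] by auto
      thus ?thesis using int_piece1[OF assms(1), of 1] int_piece2[of 1 b] False False2 by auto
    qed
  qed
qed


lemma ibp_bound:
  assumes r: "0 < r" and a: "0 < a" "a \<le> R"
  shows "\<bar>integral {a..R} (\<lambda>\<xi>. hfun \<alpha> H t \<xi> * cos (\<xi> * r))\<bar> \<le>
     (2 * (2*t+1) + ((2*t+1) * (\<alpha> - (1 - 2*H - \<alpha>)) / (1 - 2*H) + (2*t+1) * (\<alpha> - (1 - 2*H - \<alpha>)) / (-(1 - 2*H - \<alpha>)))) / r"
    (is "_ \<le> (2 * ?M + ?V) / r")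
proof -
  let ?h = "hfun \<alpha> H t" and ?d = "hdr \<alpha> H t"
  have hc: "continuous_on {a..R} ?h" using a by (intro continuous_on_subset[OF h_cont]) auto
  have dc: "continuous_on {a..R} ?d" using a by (intro continuous_on_subset[OF hdr_cont]) auto
  have i1: "(\<lambda>x. ?d x * sin (x * r) / r) integrable_on {a..R}"
    using r by (intro integrable_continuous_interval continuous_intros dc) auto
  have i2: "(\<lambda>x. ?h x * cos (x * r)) integrable_on {a..R}"
    by (intro integrable_continuous_interval continuous_intros hc)
  have "((\<lambda>x. ?d x * sin (x * r) / r + ?h x * cos (x * r)) has_integral
          (?h R * sin (R * r) / r - ?h a * sin (a * r) / r)) {a..R}"
  proof (rule fundamental_theorem_of_calculus[OF a(2)])
    fix x assume x: "x \<in> {a..R}"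
    hence xp: "0 < x" using a by auto
    have "((\<lambda>x. ?h x * sin (x * r) / r) has_real_derivative
           (?d x * sin (x * r) + ?h x * (cos (x * r) * (1 * r))) / r) (at x)"
      using h_deriv[OF xp] r by (intro derivative_eq_intros) auto
    moreover have "(?d x * sin (x * r) + ?h x * (cos (x * r) * (1 * r))) / r = ?d x * sin (x * r) / r + ?h x * cos (x * r)"
      using r by (simp add: field_simps)
    ultimately show "((\<lambda>x. ?h x * sin (x * r) / r) has_vector_derivative
        ?d x * sin (x * r) / r + ?h x * cos (x * r)) (at x within {a..R})"
      by (simp add: has_real_derivative_iff_has_vector_derivative[symmetric] has_field_derivative_at_within)
  qed
  hence "integral {a..R} (\<lambda>x. ?d x * sin (x * r) / r + ?h x * cos (x * r)) = ?h R * sin (R * r) / r - ?h a * sin (a * r) / r"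
    by (rule integral_unique)
  hence eq: "integral {a..R} (\<lambda>x. ?h x * cos (x * r)) = ?h R * sin (R * r) / r - ?h a * sin (a * r) / r
       - integral {a..R} (\<lambda>x. ?d x * sin (x * r) / r)"
    using integral_add[OF i1 i2] by simp
  have b1: "\<bar>?h R * sin (R * r) / r\<bar> \<le> ?M / r"
  proof -
    have "\<bar>?h R * sin (R * r)\<bar> \<le> ?M * 1"
      unfolding abs_mult using h_bound[of R] a at by (intro mult_mono) auto
    thus ?thesis using r by (simp add: divide_right_mono)
  qed
  have b2: "\<bar>?h a * sin (a * r) / r\<bar> \<le> ?M / r"
  proof -
    have "\<bar>?h a * sin (a * r)\<bar> \<le> ?M * 1"
      unfolding abs_mult using h_bound[of a] a at by (intro mult_mono) auto
    thus ?thesis using r by (simp add: divide_right_mono)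
  qed
  have "norm (integral {a..R} (\<lambda>x. ?d x * sin (x * r) / r)) \<le> integral {a..R} (\<lambda>x. (1/r) * \<bar>?d x\<bar>)"
  proof (rule integral_norm_bound_integral[OF i1])
    show "(\<lambda>x. (1/r) * \<bar>?d x\<bar>) integrable_on {a..R}"
      by (intro integrable_continuous_interval continuous_intros dc)
    fix x assume "x \<in> {a..R}"
    have "\<bar>?d x * sin (x * r)\<bar> \<le> \<bar>?d x\<bar> * 1" unfolding abs_mult by (intro mult_left_mono) auto
    thus "norm (?d x * sin (x * r) / r) \<le> (1/r) * \<bar>?d x\<bar>" using r by (simp add: divide_right_mono)
  qed
  also have "\<dots> = (1/r) * integral {a..R} (\<lambda>x. \<bar>?d x\<bar>)" by simp
  also have "\<dots> \<le> (1/r) * ?V" using int_absd[OF a] r by (intro mult_left_mono) auto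
  finally have b3: "\<bar>integral {a..R} (\<lambda>x. ?d x * sin (x * r) / r)\<bar> \<le> ?V / r" by simp
  have "\<bar>integral {a..R} (\<lambda>x. ?h x * cos (x * r))\<bar> \<le> ?M / r + ?M / r + ?V / r"
    unfolding eq using b1 b2 b3 by linarith
  also have "\<dots> = (2 * ?M + ?V) / r"
  proof -
    have "x/r + x/r + y/r = (2*x+y)/r" for x y :: real by (simp add: add_divide_distrib)
    thus ?thesis by blast
  qed
  finally show ?thesis .
qed


lemma dom_int: "(\<lambda>x. (1+x) powr (1 - 2*H - \<alpha>)) integrable_on {0..}"
proof -
  define \<beta> where "\<beta> = 1 - 2*H - \<alpha>"
  have b: "\<beta> < -1" using aH1 unfolding \<beta>_def by auto
  have int: "(\<lambda>x. (1+x) powr \<beta>) integrable_on {0..y}" for y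
    by (intro integrable_continuous_interval continuous_intros) auto
  have eq: "integral {0..y} (\<lambda>x. (1+x) powr \<beta>) = (1+y) powr (\<beta>+1)/(\<beta>+1) - 1/(\<beta>+1)" if y: "0 \<le> y" for y
  proof -
    have "((\<lambda>x. (1+x) powr \<beta>) has_integral ((1+y) powr (\<beta>+1)/(\<beta>+1) - (1+0) powr (\<beta>+1)/(\<beta>+1))) {0..y}"
    proof (rule fundamental_theorem_of_calculus[OF y])
      fix x assume x: "x \<in> {0..y}"
      have "((\<lambda>x. (1+x) powr (\<beta>+1)/(\<beta>+1)) has_real_derivative ((\<beta>+1) * (1+x) powr (\<beta>+1-1) * (0+1))/(\<beta>+1)) (at x within {0..y})"
        using x b by (intro derivative_eq_intros) auto
      moreover have "((\<beta>+1) * (1+x) powr (\<beta>+1-1) * (0+1))/(\<beta>+1) = (1+x) powr \<beta>" using b by simp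
      ultimately show "((\<lambda>x. (1+x) powr (\<beta>+1)/(\<beta>+1)) has_vector_derivative (1+x) powr \<beta>) (at x within {0..y})"
        by (simp add: has_real_derivative_iff_has_vector_derivative)
    qed
    thus ?thesis by (simp add: integral_unique)
  qed
  have lim0: "((\<lambda>y::real. (1+y) powr (\<beta>+1)/(\<beta>+1) - 1/(\<beta>+1)) \<longlongrightarrow> 0/(\<beta>+1) - 1/(\<beta>+1)) at_top"
  proof (intro tendsto_intros)
    show "((\<lambda>y::real. (1+y) powr (\<beta>+1)) \<longlongrightarrow> 0) at_top" using b by real_asymp
  qed (use b in auto)
  have lim: "((\<lambda>y. integral {0..y} (\<lambda>x. (1+x) powr \<beta>)) \<longlongrightarrow> 0/(\<beta>+1) - 1/(\<beta>+1)) at_top"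
    by (rule Lim_transform_eventually[OF lim0]) (auto intro!: eventually_mono[OF eventually_ge_at_top[of 0]] simp: eq)
  have "((\<lambda>x. (1+x) powr \<beta>) has_integral (0/(\<beta>+1) - 1/(\<beta>+1))) {0..}"
    by (rule has_integral_to_inf[OF int lim]) auto
  thus ?thesis unfolding \<beta>_def by blast
qed

lemma f_abs_int: "(\<lambda>\<xi>. hfun \<alpha> H t \<xi> * cos (\<xi> * r)) absolutely_integrable_on {0..}"
proof (rule measurable_bounded_by_integrable_imp_absolutely_integrable)
  show "(\<lambda>\<xi>. hfun \<alpha> H t \<xi> * cos (\<xi> * r)) \<in> borel_measurable (lebesgue_on {0..})"
    by (intro continuous_imp_measurable_on_sets_lebesgue continuous_intros h_cont) auto
  show "{0::real..} \<in> sets lebesgue" by simp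
  show "(\<lambda>x. ((2*t+1) * 2 powr (-(1 - 2*H - \<alpha>))) * (1+x) powr (1 - 2*H - \<alpha>)) integrable_on {0..}"
    using integrable_on_cmult_left[OF dom_int] by simp
  fix x :: real assume x: "x \<in> {0..}"
  have "\<bar>hfun \<alpha> H t x * cos (x * r)\<bar> \<le> \<bar>hfun \<alpha> H t x\<bar> * 1"
    unfolding abs_mult by (intro mult_left_mono) auto
  thus "norm (hfun \<alpha> H t x * cos (x * r)) \<le> ((2*t+1) * 2 powr (-(1 - 2*H - \<alpha>))) * (1+x) powr (1 - 2*H - \<alpha>)"
    using h_dom[of x] x by simp
qed


lemma F_lim: "((\<lambda>R. integral {0..R} (\<lambda>\<xi>. hfun \<alpha> H t \<xi> * cos (\<xi> * r)))
    \<longlongrightarrow> set_lebesgue_integral lebesgue {0..} (\<lambda>\<xi>. hfun \<alpha> H t \<xi> * cos (\<xi> * r))) at_top"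
proof -
  let ?f = "\<lambda>\<xi>. hfun \<alpha> H t \<xi> * cos (\<xi> * r)"
  have "((\<lambda>b. set_lebesgue_integral lebesgue {0..b} ?f) \<longlongrightarrow> set_lebesgue_integral lebesgue {0..} ?f) at_top"
    by (rule tendsto_set_lebesgue_integral_at_top[OF _ f_abs_int]) auto
  moreover have "set_lebesgue_integral lebesgue {0..b} ?f = integral {0..b} ?f" for b
    by (rule set_lebesgue_integral_eq_integral(2)[OF set_integrable_subset[OF f_abs_int]]) auto
  ultimately show ?thesis by simp
qed

lemma f_integrable: "(\<lambda>\<xi>. hfun \<alpha> H t \<xi> * cos (\<xi> * r)) integrable_on {0..R}"
  by (rule set_lebesgue_integral_eq_integral(1)[OF set_integrable_subset[OF f_abs_int]]) auto

lemma F_bound: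
  assumes r: "0 < r" and R: "0 < R"
  shows "\<bar>integral {0..R} (\<lambda>\<xi>. hfun \<alpha> H t \<xi> * cos (\<xi> * r))\<bar> \<le>
     (2 * (2*t+1) + ((2*t+1) * (\<alpha> - (1 - 2*H - \<alpha>)) / (1 - 2*H) + (2*t+1) * (\<alpha> - (1 - 2*H - \<alpha>)) / (-(1 - 2*H - \<alpha>)))) / r"
    (is "_ \<le> ?K")
proof -
  let ?f = "\<lambda>\<xi>. hfun \<alpha> H t \<xi> * cos (\<xi> * r)"
  let ?G = "\<lambda>a. integral {a..R} ?f"
  have "continuous_on {0..R} ?G" by (rule indefinite_integral_continuous_1'[OF f_integrable])
  hence "(?G \<longlongrightarrow> ?G 0) (at 0 within {0..R})" using R by (simp add: continuous_on_def)
  hence lim: "(?G \<longlongrightarrow> ?G 0) (at_right 0)" using at_within_Icc_at_right[OF R] by simp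
  have ev: "eventually (\<lambda>a. \<bar>?G a\<bar> \<le> ?K) (at_right 0)"
  proof -
    have "eventually (\<lambda>a. a < R) (at_right (0::real))"
      using order_tendstoD(2)[OF tendsto_ident_at R] .
    moreover have "eventually (\<lambda>a. 0 < a) (at_right (0::real))" by (rule eventually_at_right_less)
    ultimately show ?thesis
      by eventually_elim (use ibp_bound[OF r] in auto)
  qed
  show ?thesis
    by (rule tendsto_le[OF trivial_limit_at_right_real tendsto_const tendsto_rabs[OF lim] ev])
qed

lemma main_r:
  assumes r: "0 < r"
  shows "improper_integrable0 (\<lambda>\<xi>. hfun \<alpha> H t \<xi> * cos (\<xi> * r))"
    "\<bar>improper_integral0 (\<lambda>\<xi>. hfun \<alpha> H t \<xi> * cos (\<xi> * r))\<bar> \<le>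
     (2 * (2*t+1) + ((2*t+1) * (\<alpha> - (1 - 2*H - \<alpha>)) / (1 - 2*H) + (2*t+1) * (\<alpha> - (1 - 2*H - \<alpha>)) / (-(1 - 2*H - \<alpha>)))) / r"
proof -
  show "improper_integrable0 (\<lambda>\<xi>. hfun \<alpha> H t \<xi> * cos (\<xi> * r))"
    unfolding improper_integrable0_def using f_integrable F_lim by blast
  have eq: "improper_integral0 (\<lambda>\<xi>. hfun \<alpha> H t \<xi> * cos (\<xi> * r)) = 
     set_lebesgue_integral lebesgue {0..} (\<lambda>\<xi>. hfun \<alpha> H t \<xi> * cos (\<xi> * r))"
    unfolding improper_integral0_def by (rule tendsto_Lim[OF trivial_limit_at_top_linorder F_lim])
  show "\<bar>improper_integral0 (\<lambda>\<xi>. hfun \<alpha> H t \<xi> * cos (\<xi> * r))\<bar> \<le>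
     (2 * (2*t+1) + ((2*t+1) * (\<alpha> - (1 - 2*H - \<alpha>)) / (1 - 2*H) + (2*t+1) * (\<alpha> - (1 - 2*H - \<alpha>)) / (-(1 - 2*H - \<alpha>)))) / r"
    unfolding eq
    by (rule tendsto_le[OF trivial_limit_at_top_linorder tendsto_const tendsto_rabs[OF F_lim]])
       (rule eventually_mono[OF eventually_gt_at_top[of 0] F_bound[OF r]])
qed

end

theorem mainTheorem12:
  fixes \<alpha> H t :: real
  assumes "1 < \<alpha>" "\<alpha> < 2" "(2 - \<alpha>) / 2 < H" "H < 1/2" "t > 0"
  shows "(\<forall>r>0. improper_integrable0 (\<lambda>\<xi>. hfun \<alpha> H t \<xi> * cos (\<xi> * r)))
    \<and> (\<lambda>r. improper_integral0 (\<lambda>\<xi>. hfun \<alpha> H t \<xi> * cos (\<xi> * r)))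
        \<in> O[at_top](\<lambda>r. r powr ((H - 1) / 2))"
proof
  show "\<forall>r>0. improper_integrable0 (\<lambda>\<xi>. hfun \<alpha> H t \<xi> * cos (\<xi> * r))"
    using main_r(1)[OF assms] by blast
  define K where "K = (2 * (2*t+1) + ((2*t+1) * (\<alpha> - (1 - 2*H - \<alpha>)) / (1 - 2*H) + (2*t+1) * (\<alpha> - (1 - 2*H - \<alpha>)) / (-(1 - 2*H - \<alpha>))))"
  show "(\<lambda>r. improper_integral0 (\<lambda>\<xi>. hfun \<alpha> H t \<xi> * cos (\<xi> * r)))
        \<in> O[at_top](\<lambda>r. r powr ((H - 1) / 2))"
  proof (rule bigoI)
    show "eventually (\<lambda>r. norm (improper_integral0 (\<lambda>\<xi>. hfun \<alpha> H t \<xi> * cos (\<xi> * r)))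
        \<le> \<bar>K\<bar> * norm (r powr ((H - 1) / 2))) at_top"
    proof (rule eventually_mono[OF eventually_ge_at_top[of 1]])
      fix r :: real assume r: "1 \<le> r"
      have b: "\<bar>improper_integral0 (\<lambda>\<xi>. hfun \<alpha> H t \<xi> * cos (\<xi> * r))\<bar> \<le> K / r"
        using main_r(2)[OF assms, of r] r unfolding K_def by linarith
      have "r powr (-1) \<le> r powr ((H - 1) / 2)"
        using r assms by (intro powr_mono) auto
      moreover have "r powr (-1) = 1 / r" using r by (simp add: powr_minus_divide)
      ultimately have A: "1 / r \<le> r powr ((H - 1) / 2)" by simp
      hence A2: "\<bar>K\<bar> * (1 / r) \<le> \<bar>K\<bar> * r powr ((H - 1) / 2)" by (intro mult_left_mono) auto
      have B: "K / r \<le> \<bar>K\<bar> * (1 / r)"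
      proof -
        have "K * (1/r) \<le> \<bar>K\<bar> * (1 / r)" using r by (intro mult_right_mono) auto
        thus ?thesis by simp
      qed
      have n: "\<bar>r powr ((H - 1) / 2)\<bar> = r powr ((H - 1) / 2)" by simp
      show "norm (improper_integral0 (\<lambda>\<xi>. hfun \<alpha> H t \<xi> * cos (\<xi> * r)))
        \<le> \<bar>K\<bar> * norm (r powr ((H - 1) / 2))" unfolding real_norm_def n using b A2 B by linarith
    qed
  qed
qed

end
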